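(* Let $X$ be a random vector in $\mathbb{R}^n$. Then $\mathbb{P}\big(X\in\mathcal{C}_n(X)\big)=1$.
   Context: For a random vector $X$ in $\mathbb{R}^n$ and an integer $m\ge0$, the $m$-dimensional mould $\mathcal{C}_m(X)$ is the set of all $x\in\mathbb{R}^n$ such that $\liminf_{\epsilon\to0^+}\mathbb{P}(\|X-x\|_2<\epsilon)/\epsilon^m>0$. (It is a Borel subset of $\mathbb{R}^n$.) *)

theory Defs
  imports "HOL-Probability.Probability"
begin

definition mould :: "'b measure \<Rightarrow> ('b \<Rightarrow> 'a::euclidean_space) \<Rightarrow> nat \<Rightarrow> 'a set" where
  "mould M X m = {x. Liminf (at_right (0::real))
      (\<lambda>e. ereal (measure M {\<omega> \<in> space M. norm (X \<omega> - x) < e} / e ^ m)) > 0}"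

end

theory Submission
  imports Defs
begin

lemma emeasure_UN_countable_le:
  assumes sets: "\<And>i. i \<in> I \<Longrightarrow> X i \<in> sets M" and I: "countable I"
  shows "emeasure M (\<Union>(X ` I)) \<le> (\<integral>\<^sup>+i. emeasure M (X i) \<partial>count_space I)"
proof -
  have U: "\<Union>(X ` I) \<in> sets M" using sets I by (intro sets.countable_UN') auto
  have pt: "indicator (\<Union>(X ` I)) x \<le> (\<integral>\<^sup>+ i. indicator (X i) x \<partial>count_space I)" for x
  proof (cases "x \<in> \<Union>(X ` I)")
    case True
    then obtain j where j: "x \<in> X j" "j \<in> I" by auto
    have "(1::ennreal) = (\<integral>\<^sup>+ i. indicator {j} i \<partial>count_space I)"
      using j by (subst nn_integral_indicator) auto
    also have "\<dots> \<le> (\<integral>\<^sup>+ i. indicator (X i) x \<partial>count_space I)"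
      using j by (intro nn_integral_mono) (auto split: split_indicator)
    finally show ?thesis using True by simp
  qed simp
  have "emeasure M (\<Union>(X ` I)) = (\<integral>\<^sup>+x. indicator (\<Union>(X ` I)) x \<partial>M)"
    using U by simp
  also have "\<dots> \<le> (\<integral>\<^sup>+x. \<integral>\<^sup>+ i. indicator (X i) x \<partial>count_space I \<partial>M)"
    by (intro nn_integral_mono pt)
  also have "\<dots> = (\<integral>\<^sup>+i. \<integral>\<^sup>+x. indicator (X i) x \<partial>M \<partial>count_space I)"
    using sets I by (intro nn_integral_count_space_nn_integral) auto
  also have "\<dots> = (\<integral>\<^sup>+i. emeasure M (X i) \<partial>count_space I)"
    using sets by (intro nn_integral_cong) auto
  finally show ?thesis .
qed

lemma cover_bound:
  fixes \<mu> :: "'a::euclidean_space measure"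
  assumes sets_mu: "sets \<mu> = sets borel" and fin: "finite_measure \<mu>"
    and A: "A \<subseteq> ball 0 k" and c: "c > 0"
    and H: "\<And>x \<delta>. x \<in> A \<Longrightarrow> \<delta> > 0 \<Longrightarrow> \<exists>e. 0 < e \<and> e < \<delta> \<and> measure \<mu> (ball x e) \<le> c * e ^ DIM('a)"
  shows "emeasure \<mu> A * emeasure lebesgue (ball (0::'a) 1)
           \<le> ennreal (c * 5 ^ DIM('a)) * emeasure lebesgue (ball (0::'a) (k+1))"
proof -
  define n where "n = DIM('a)"
  define V where "V = emeasure lebesgue (ball (0::'a) 1)"
  define K where "K = {p::'a\<times>real. fst p \<in> A \<and> 0 < snd p \<and> snd p < 1 \<and>
                        measure \<mu> (ball (fst p) (snd p)) \<le> c * snd p ^ n}"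
  have S: "A \<subseteq> (\<Union>p\<in>K. ball (fst p) (snd p / 5))"
  proof
    fix x assume x: "x \<in> A"
    obtain e where e: "0 < e" "e < 1" "measure \<mu> (ball x e) \<le> c * e ^ n"
      using H[OF x, of 1] n_def by auto
    then have "(x,e) \<in> K" using x K_def by auto
    then show "x \<in> (\<Union>p\<in>K. ball (fst p) (snd p / 5))" using e by force
  qed
  have r: "\<And>p. p \<in> K \<Longrightarrow> 0 < snd p / 5 \<and> snd p / 5 \<le> 1" by (auto simp: K_def)
  obtain C where C: "countable C" "C \<subseteq> K"
    and pw: "pairwise (\<lambda>i j. disjnt (ball (fst i) (snd i / 5)) (ball (fst j) (snd j / 5))) C"
    and cov: "A \<subseteq> (\<Union>p\<in>C. ball (fst p) (5 * (snd p / 5)))"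
    using Vitali_covering_lemma_balls[OF S r] by blast
  have cov': "A \<subseteq> (\<Union>p\<in>C. ball (fst p) (snd p))" using cov by simp
  have "emeasure \<mu> A \<le> emeasure \<mu> (\<Union>p\<in>C. ball (fst p) (snd p))"
    by (rule emeasure_mono[OF cov']) (auto simp: sets_mu intro!: sets.countable_UN' C)
  also have "\<dots> \<le> (\<integral>\<^sup>+p. emeasure \<mu> (ball (fst p) (snd p)) \<partial>count_space C)"
    by (rule emeasure_UN_countable_le) (auto simp: sets_mu C)
  also have "\<dots> \<le> (\<integral>\<^sup>+p. ennreal (c * snd p ^ n) \<partial>count_space C)"
  proof (rule nn_integral_mono)
    fix p assume "p \<in> space (count_space C)"
    then have "p \<in> K" using C by auto
    then show "emeasure \<mu> (ball (fst p) (snd p)) \<le> ennreal (c * snd p ^ n)"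
      using finite_measure.emeasure_eq_measure[OF fin] by (auto simp: K_def intro: ennreal_leI)
  qed
  finally have 1: "emeasure \<mu> A \<le> (\<integral>\<^sup>+p. ennreal (c * snd p ^ n) \<partial>count_space C)" .
  have eqUN: "(\<integral>\<^sup>+p. emeasure lebesgue (ball (fst p) (snd p / 5)) \<partial>count_space C)
      = emeasure lebesgue (\<Union>p\<in>C. ball (fst p) (snd p / 5))"
    by (rule emeasure_UN_countable[symmetric])
      (use C pw in \<open>auto simp: disjoint_family_on_def pairwise_def disjnt_def\<close>)
  have sub: "emeasure lebesgue (\<Union>p\<in>C. ball (fst p) (snd p / 5)) \<le> emeasure lebesgue (ball (0::'a) (k+1))"
  proof (rule emeasure_mono)
    show "(\<Union>p\<in>C. ball (fst p) (snd p / 5)) \<subseteq> ball 0 (k + 1)"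
    proof
      fix y assume "y \<in> (\<Union>p\<in>C. ball (fst p) (snd p / 5))"
      then obtain p where p: "p \<in> C" "dist (fst p) y < snd p / 5" by auto
      then have "p \<in> K" using C by auto
      then have "dist 0 (fst p) < k" "snd p < 1" using A by (auto simp: K_def)
      then show "y \<in> ball 0 (k+1)" using p dist_triangle[of 0 y "fst p"] by (simp add: dist_commute)
    qed
  qed auto
  have "emeasure \<mu> A * V \<le> (\<integral>\<^sup>+p. ennreal (c * snd p ^ n) \<partial>count_space C) * V"
    by (rule mult_right_mono[OF 1]) simp
  also have "\<dots> = (\<integral>\<^sup>+p. ennreal (c * snd p ^ n) * V \<partial>count_space C)"
    by (rule nn_integral_multc[symmetric]) simp
  also have "\<dots> = (\<integral>\<^sup>+p. ennreal (c * 5^n) * emeasure lebesgue (ball (fst p) (snd p / 5)) \<partial>count_space C)"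
  proof (rule nn_integral_cong)
    fix p assume "p \<in> space (count_space C)"
    then have p: "snd p > 0" using C by (auto simp: K_def)
    have "emeasure lebesgue (ball (fst p) (snd p / 5)) = ennreal ((snd p / 5)^n) * V"
      using emeasure_lebesgue_ball_conv_unit_ball[of "snd p / 5" "fst p"] p by (simp add: n_def V_def)
    moreover have "c * snd p ^ n = (c * 5^n) * (snd p / 5)^n" by (simp add: power_divide)
    ultimately show "ennreal (c * snd p ^ n) * V = ennreal (c * 5^n) * emeasure lebesgue (ball (fst p) (snd p / 5))"
      using c p by (simp add: ennreal_mult' mult.assoc)
  qed
  also have "\<dots> = ennreal (c*5^n) * (\<integral>\<^sup>+p. emeasure lebesgue (ball (fst p) (snd p / 5)) \<partial>count_space C)"
    by (rule nn_integral_cmult) simp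
  also have "\<dots> = ennreal (c*5^n) * emeasure lebesgue (\<Union>p\<in>C. ball (fst p) (snd p / 5))"
    by (simp only: eqUN)
  also have "\<dots> \<le> ennreal (c*5^n) * emeasure lebesgue (ball (0::'a) (k+1))"
    by (rule mult_left_mono[OF sub]) simp
  finally have fin_ineq: "emeasure \<mu> A * V \<le> ennreal (c*5^n) * emeasure lebesgue (ball (0::'a) (k+1))" .
  then show ?thesis by (simp only: n_def V_def)
qed

lemma liminf_pos_I:
  fixes g :: "real \<Rightarrow> real"
  assumes "c > 0" "\<delta> > 0" "\<And>e. 0 < e \<Longrightarrow> e < \<delta> \<Longrightarrow> c \<le> g e"
  shows "0 < Liminf (at_right 0) (\<lambda>e. ereal (g e))"
proof -
  have "eventually (\<lambda>e. ereal c \<le> ereal (g e)) (at_right (0::real))"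
    unfolding eventually_at_right_field using assms by auto
  then have "ereal c \<le> Liminf (at_right 0) (\<lambda>e. ereal (g e))" by (rule Liminf_bounded)
  then show ?thesis using assms(1) by (meson ereal_less(2) less_le_trans)
qed

lemma liminf_pos_D:
  fixes g :: "real \<Rightarrow> real"
  assumes "0 < Liminf (at_right 0) (\<lambda>e. ereal (g e))"
  obtains d b where "d > 0" "b > 0" "\<And>e. 0 < e \<Longrightarrow> e < b \<Longrightarrow> d < g e"
proof -
  obtain d where d: "0 < ereal d" "ereal d < Liminf (at_right 0) (\<lambda>e. ereal (g e))"
    using ereal_dense2[OF assms] by blast
  have all: "\<forall>y < Liminf (at_right 0) (\<lambda>e. ereal (g e)). eventually (\<lambda>e. y < ereal (g e)) (at_right (0::real))"
    using le_Liminf_iff[of "Liminf (at_right 0) (\<lambda>e. ereal (g e))" "at_right (0::real)" "\<lambda>e. ereal (g e)"]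
    by simp
  have "eventually (\<lambda>e. ereal d < ereal (g e)) (at_right (0::real))"
    using all d(2) by blast
  then obtain b where b: "b > 0" "\<And>e. e > 0 \<Longrightarrow> e < b \<Longrightarrow> ereal d < ereal (g e)"
    unfolding eventually_at_right_field by blast
  have d0: "d > 0" using d(1) by simp
  have "\<And>e. 0 < e \<Longrightarrow> e < b \<Longrightarrow> d < g e" using b(2) by simp
  then show ?thesis by (rule that[OF d0 b(1)])
qed

theorem mainTheorem5:
  fixes M :: "'b measure" and X :: "'b \<Rightarrow> 'a::euclidean_space"
  assumes "prob_space M"
    and "X \<in> borel_measurable M"
  shows "measure M {\<omega> \<in> space M. X \<omega> \<in> mould M X DIM('a)} = 1"
proof -
  interpret P: prob_space M by (rule assms(1))
  define n where "n = DIM('a)"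
  define \<mu> where "\<mu> = distr M borel X"
  have Pmu: "prob_space \<mu>" unfolding \<mu>_def by (rule P.prob_space_distr[OF assms(2)])
  interpret Q: prob_space \<mu> by (rule Pmu)
  have fin: "finite_measure \<mu>" by (rule Q.finite_measure_axioms)
  have sets_mu: "sets \<mu> = sets borel" and space_mu: "space \<mu> = UNIV" by (simp_all add: \<mu>_def)
  define f where "f x e = measure \<mu> (ball x e)" for x e
  have f_eq: "measure M {\<omega>\<in>space M. norm (X \<omega> - x) < e} = f x e" for x e
  proof -
    have "f x e = measure M (X -` ball x e \<inter> space M)"
      unfolding f_def \<mu>_def by (rule measure_distr[OF assms(2)]) simp
    also have "X -` ball x e \<inter> space M = {\<omega>\<in>space M. norm (X \<omega> - x) < e}"
      by (auto simp: dist_norm norm_minus_commute)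
    finally show ?thesis by simp
  qed
  have mould_eq: "mould M X n = {x. 0 < Liminf (at_right 0) (\<lambda>e. ereal (f x e / e^n))}"
    unfolding mould_def f_eq by simp
  have fmeas[measurable]: "(\<lambda>x. f x r) \<in> borel_measurable borel" for r
  proof -
    have op: "open {p::'a\<times>'a. dist (fst p) (snd p) < r}"
      by (intro open_Collect_less continuous_intros)
    have "{p::'a\<times>'a. dist (fst p) (snd p) < r} \<in> sets (borel \<Otimes>\<^sub>M \<mu>)"
      using op unfolding sets_pair_measure_cong[OF refl sets_mu] borel_prod by simp
    then have "(\<lambda>x. emeasure \<mu> (Pair x -` {p::'a\<times>'a. dist (fst p) (snd p) < r})) \<in> borel_measurable borel"
      by (rule Q.measurable_emeasure_Pair)
    moreover have "\<And>x. Pair x -` {p::'a\<times>'a. dist (fst p) (snd p) < r} = ball x r"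
      by (auto simp: ball_def)
    ultimately have "(\<lambda>x. emeasure \<mu> (ball x r)) \<in> borel_measurable borel" by simp
    then show ?thesis unfolding f_def measure_def by measurable
  qed
  define R where "R = (\<Union>c\<in>\<rat>\<inter>{0<..}. \<Union>m::nat. \<Inter>r\<in>\<rat>.
        {x. 0 < r \<and> r < 1 / real (Suc m) \<longrightarrow> c * r ^ n \<le> f x r})"
  have Rb: "R \<in> sets borel"
  proof -
    have cq: "countable (\<rat> \<inter> {0<..})" by (rule countable_subset[OF _ countable_rat]) auto
    have 1: "{x. 0 < r \<and> r < 1 / real (Suc m) \<longrightarrow> c * r ^ n \<le> f x r} \<in> sets borel" for r m c
    proof (cases "0 < r \<and> r < 1 / real (Suc m)")
      case True
      have "{x \<in> space borel. c * r ^ n \<le> f x r} \<in> sets borel" by measurable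
      then show ?thesis using True by simp
    qed simp
    show ?thesis unfolding R_def
      by (intro sets.countable_UN''[OF cq] sets.countable_UN''[OF countableI_type]
          sets.countable_INT''[OF _ countable_rat] 1) auto
  qed
  have mould_R: "mould M X n = R"
  proof
    show "mould M X n \<subseteq> R"
    proof
      fix x assume "x \<in> mould M X n"
      then have "0 < Liminf (at_right 0) (\<lambda>e. ereal (f x e / e^n))" by (simp add: mould_eq)
      then obtain d b where d: "d > 0" "b > 0" "\<And>e. 0 < e \<Longrightarrow> e < b \<Longrightarrow> d < f x e / e^n"
        by (rule liminf_pos_D) blast+
      obtain c where c: "c \<in> \<rat>" "0 < c" "c < d" using Rats_dense_in_real[OF d(1)] by auto
      obtain m where m: "inverse (real (Suc m)) < b" using reals_Archimedean[OF d(2)] by auto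
      have "c * r ^ n \<le> f x r" if "0 < r" "r < 1 / real (Suc m)" for r
      proof -
        have "1 / real (Suc m) < b" using m by (metis inverse_eq_divide)
        then have "r < b" using that by linarith
        then have "d < f x r / r^n" using d that by auto
        then have "d * r^n < f x r" using that by (simp add: field_simps)
        moreover have "c * r^n \<le> d * r^n" using c that by (intro mult_right_mono) auto
        ultimately show ?thesis by linarith
      qed
      then show "x \<in> R" unfolding R_def using c by blast
    qed
  next
    show "R \<subseteq> mould M X n"
    proof
      fix x assume "x \<in> R"
      then obtain c m where c: "c \<in> \<rat>" "0 < c"
        and H: "\<And>r. r \<in> \<rat> \<Longrightarrow> 0 < r \<Longrightarrow> r < 1 / real (Suc m) \<Longrightarrow> c * r ^ n \<le> f x r"
        unfolding R_def by blast
      have "c / 2 ^ n \<le> f x e / e ^ n" if e: "0 < e" "e < 1 / real (Suc m)" for e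
      proof -
        obtain r where r: "r \<in> \<rat>" "e / 2 < r" "r < e" using Rats_dense_in_real[of "e/2" e] e by auto
        have r0: "0 < r" using r e by linarith
        have "c * (e/2) ^ n \<le> c * r ^ n" using r r0 c e by (intro mult_left_mono power_mono) auto
        also have "\<dots> \<le> f x r" using H[OF r(1) r0] r e by linarith
        also have "f x r \<le> f x e" unfolding f_def
          using r by (intro Q.finite_measure_mono) (auto simp: sets_mu)
        finally have "c / 2^n * e^n \<le> f x e" by (simp add: power_divide)
        then show ?thesis using e by (simp add: field_simps)
      qed
      then have "0 < Liminf (at_right 0) (\<lambda>e. ereal (f x e / e^n))"
        by (intro liminf_pos_I[of "c / 2^n" "1 / real (Suc m)"]) (use c in auto)
      then show "x \<in> mould M X n" by (simp add: mould_eq)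
    qed
  qed
  have mb: "mould M X n \<in> sets borel" using Rb mould_R by simp
  define B where "B k = - mould M X n \<inter> ball 0 (real k)" for k :: nat
  have Bnull: "B k \<in> null_sets \<mu>" for k
  proof -
    have Bs: "B k \<in> sets \<mu>" unfolding B_def using mb by (auto simp: sets_mu)
    have content_eq: "emeasure lebesgue (ball (0::'a) r) = ennreal (measure lborel (ball (0::'a) r))" for r
      using emeasure_lborel_ball_finite[of "0::'a" r] by (subst emeasure_eq_ennreal_measure) auto
    define a where "a = measure \<mu> (B k)"
    define v where "v = measure lborel (ball (0::'a) 1)"
    define l where "l = measure lborel (ball (0::'a) (real k + 1))"
    have v: "v > 0" by (simp add: v_def)
    have a0: "a \<ge> 0" "l \<ge> 0" by (simp_all add: a_def l_def)
    have ineq: "a * v \<le> c * 5^n * l" if c: "c > 0" for c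
    proof -
      have H: "\<exists>e. 0 < e \<and> e < \<delta> \<and> measure \<mu> (ball x e) \<le> c * e ^ DIM('a)"
        if x: "x \<in> B k" and \<delta>: "\<delta> > 0" for x \<delta>
      proof (rule ccontr)
        assume "\<not> ?thesis"
        then have "\<And>e. 0 < e \<Longrightarrow> e < \<delta> \<Longrightarrow> c \<le> f x e / e^n"
          by (auto simp: f_def n_def field_simps)
        then have "0 < Liminf (at_right 0) (\<lambda>e. ereal (f x e / e^n))"
          by (rule liminf_pos_I[OF c \<delta>])
        then show False using x by (simp add: B_def mould_eq)
      qed
      have "emeasure \<mu> (B k) * emeasure lebesgue (ball (0::'a) 1)
           \<le> ennreal (c * 5 ^ DIM('a)) * emeasure lebesgue (ball (0::'a) (real k+1))"
        by (rule cover_bound[OF sets_mu fin _ c H]) (auto simp: B_def)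
      then have "ennreal a * ennreal v \<le> ennreal (c * 5^n) * ennreal l"
        by (simp add: content_eq a_def v_def l_def n_def Q.emeasure_eq_measure)
      then have "ennreal (a * v) \<le> ennreal (c * 5^n * l)"
        using a0 v c by (simp add: ennreal_mult')
      then show ?thesis using a0 v c by (subst (asm) ennreal_le_iff) auto
    qed
    have "a * v \<le> 0"
    proof (rule ccontr)
      assume neg: "\<not> a * v \<le> 0"
      define c where "c = a * v / (2 * (5^n * l + 1))"
      have "0 \<le> (5::real)^n * l" using a0 by simp
      then have den: "0 < 2 * (5^n * l + 1)" by (simp add: add_nonneg_pos)
      have cp: "c > 0" unfolding c_def using neg den by (intro divide_pos_pos) auto
      have "a * v \<le> c * (5^n * l)" using ineq[OF cp] by (simp add: mult.assoc)
      also have "\<dots> < a * v"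
      proof -
        have "c * (5^n * l) \<le> c * (5^n * l + 1)" using cp by simp
        also have "\<dots> = a * v / 2" unfolding c_def using den by (simp add: field_simps)
        finally show ?thesis using neg by linarith
      qed
      finally show False by simp
    qed
    then have "a = 0" using a0 v by (simp add: mult_le_0_iff)
    then show ?thesis using Bs by (auto simp: null_sets_def a_def Q.emeasure_eq_measure)
  qed
  have "- mould M X n = (\<Union>k. B k)"
  proof
    show "- mould M X n \<subseteq> (\<Union>k. B k)"
    proof
      fix x assume x: "x \<in> - mould M X n"
      obtain k :: nat where "norm x < real k" using reals_Archimedean2 by blast
      then show "x \<in> (\<Union>k. B k)" using x by (auto simp: B_def)
    qed
  qed (auto simp: B_def)
  then have cnull: "- mould M X n \<in> null_sets \<mu>" using Bnull by auto
  have "measure \<mu> (mould M X n) = measure \<mu> (space \<mu> - (- mould M X n))"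
    by (simp add: space_mu Compl_eq_Diff_UNIV[symmetric])
  also have "\<dots> = measure \<mu> (space \<mu>)" by (rule measure_Diff_null_set[OF _ cnull]) simp
  also have "\<dots> = 1" by (rule Q.prob_space)
  finally have m1: "measure \<mu> (mould M X n) = 1" .
  have "measure \<mu> (mould M X n) = measure M (X -` mould M X n \<inter> space M)"
    unfolding \<mu>_def by (rule measure_distr[OF assms(2)]) (simp add: mb)
  also have "X -` mould M X n \<inter> space M = {\<omega> \<in> space M. X \<omega> \<in> mould M X DIM('a)}"
    by (auto simp: n_def)
  finally show ?thesis using m1 by simp
qed

end
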